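(* Let $V$ be a quasi-regular mixed lattice vector space and $A$ a linear subspace of $V$. Then $A$ is an ideal if and only if: whenever $x\in V$, $y\in A$ and $s(x)\le s(y)$, we have $x\in A$.
   Context: A mixed lattice vector space is a real vector space $V$ with two partial orderings $\le$ (initial) and $\preceq$ (specific), each compatible with the vector space structure, such that for all $x,y$ the mixed lower envelope $x\curlywedge y=\max\{w: w\preceq x,\ w\le y\}$ and mixed upper envelope $x\curlyvee y=\min\{w: x\preceq w,\ y\le w\}$ exist (max/min with respect to $\le$). $V$ is quasi-regular if $V_{sp}=\{x:0\preceq x\}$ is closed under $\curlywedge,\curlyvee$. An ideal is a linear subspace closed under $\curlywedge,\curlyvee$ which is $(\le)$-order convex ($x\le z\le y$ with $x,y$ in it implies $z$ in it). The symmetric generalized absolute value of $x$ is $s(x)=\tfrac12\big((x\curlyvee 0)+(0\curlyvee(-x))+((-x)\curlyvee 0)+(0\curlyvee x)\big)$. *)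

theory Defs
  imports "HOL-Analysis.Analysis"
begin

definition ordered_vs :: "('a::real_vector \<Rightarrow> 'a \<Rightarrow> bool) \<Rightarrow> bool" where
  "ordered_vs R \<longleftrightarrow>
     (\<forall>x. R x x) \<and> (\<forall>x y. R x y \<and> R y x \<longrightarrow> x = y) \<and>
     (\<forall>x y z. R x y \<and> R y z \<longrightarrow> R x z) \<and>
     (\<forall>x y z. R x y \<longrightarrow> R (x + z) (y + z)) \<and>
     (\<forall>x y (c::real). R x y \<and> 0 \<le> c \<longrightarrow> R (c *\<^sub>R x) (c *\<^sub>R y))"

definition is_mlow :: "('a \<Rightarrow> 'a \<Rightarrow> bool) \<Rightarrow> ('a \<Rightarrow> 'a \<Rightarrow> bool) \<Rightarrow> 'a \<Rightarrow> 'a \<Rightarrow> 'a \<Rightarrow> bool" where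
  "is_mlow le sle x y m \<longleftrightarrow> sle m x \<and> le m y \<and> (\<forall>w. sle w x \<and> le w y \<longrightarrow> le w m)"

definition is_mup :: "('a \<Rightarrow> 'a \<Rightarrow> bool) \<Rightarrow> ('a \<Rightarrow> 'a \<Rightarrow> bool) \<Rightarrow> 'a \<Rightarrow> 'a \<Rightarrow> 'a \<Rightarrow> bool" where
  "is_mup le sle x y m \<longleftrightarrow> sle x m \<and> le y m \<and> (\<forall>w. sle x w \<and> le y w \<longrightarrow> le m w)"

definition mlow :: "('a \<Rightarrow> 'a \<Rightarrow> bool) \<Rightarrow> ('a \<Rightarrow> 'a \<Rightarrow> bool) \<Rightarrow> 'a \<Rightarrow> 'a \<Rightarrow> 'a" where
  "mlow le sle x y = (THE m. is_mlow le sle x y m)"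

definition mup :: "('a \<Rightarrow> 'a \<Rightarrow> bool) \<Rightarrow> ('a \<Rightarrow> 'a \<Rightarrow> bool) \<Rightarrow> 'a \<Rightarrow> 'a \<Rightarrow> 'a" where
  "mup le sle x y = (THE m. is_mup le sle x y m)"

definition mixed_lattice_vs :: "('a::real_vector \<Rightarrow> 'a \<Rightarrow> bool) \<Rightarrow> ('a \<Rightarrow> 'a \<Rightarrow> bool) \<Rightarrow> bool" where
  "mixed_lattice_vs le sle \<longleftrightarrow> ordered_vs le \<and> ordered_vs sle \<and>
     (\<forall>x y. \<exists>m. is_mlow le sle x y m) \<and> (\<forall>x y. \<exists>m. is_mup le sle x y m)"

definition quasi_regular :: "('a::real_vector \<Rightarrow> 'a \<Rightarrow> bool) \<Rightarrow> ('a \<Rightarrow> 'a \<Rightarrow> bool) \<Rightarrow> bool" where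
  "quasi_regular le sle \<longleftrightarrow>
     (\<forall>x y. sle 0 x \<and> sle 0 y \<longrightarrow> sle 0 (mlow le sle x y) \<and> sle 0 (mup le sle x y))"

definition ml_ideal :: "('a::real_vector \<Rightarrow> 'a \<Rightarrow> bool) \<Rightarrow> ('a \<Rightarrow> 'a \<Rightarrow> bool) \<Rightarrow> 'a set \<Rightarrow> bool" where
  "ml_ideal le sle A \<longleftrightarrow> subspace A \<and>
     (\<forall>x\<in>A. \<forall>y\<in>A. mlow le sle x y \<in> A \<and> mup le sle x y \<in> A) \<and>
     (\<forall>x\<in>A. \<forall>y\<in>A. \<forall>z. le x z \<and> le z y \<longrightarrow> z \<in> A)"

definition sabs :: "('a::real_vector \<Rightarrow> 'a \<Rightarrow> bool) \<Rightarrow> ('a \<Rightarrow> 'a \<Rightarrow> bool) \<Rightarrow> 'a \<Rightarrow> 'a" where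
  "sabs le sle x = (1/2) *\<^sub>R (mup le sle x 0 + mup le sle 0 (- x) + mup le sle (- x) 0 + mup le sle 0 x)"

end

theory Submission
  imports Defs
begin

lemma ovs_refl: "ordered_vs R \<Longrightarrow> R x x"
  unfolding ordered_vs_def by blast
lemma ovs_antisym: "ordered_vs R \<Longrightarrow> R x y \<Longrightarrow> R y x \<Longrightarrow> x = y"
  unfolding ordered_vs_def by blast
lemma ovs_trans: "ordered_vs R \<Longrightarrow> R x y \<Longrightarrow> R y z \<Longrightarrow> R x z"
  unfolding ordered_vs_def by blast
lemma ovs_addr: "ordered_vs R \<Longrightarrow> R x y \<Longrightarrow> R (x + z) (y + z)"
  unfolding ordered_vs_def by blast
lemma ovs_scale: "ordered_vs R \<Longrightarrow> R x y \<Longrightarrow> 0 \<le> c \<Longrightarrow> R (c *\<^sub>R x) (c *\<^sub>R y)"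
  unfolding ordered_vs_def by blast

lemma ovs_eqdiff:
  assumes o: "ordered_vs R" and r: "R a b" and e: "b - a = d - c"
  shows "R c d"
proof -
  have "R (a + (c - a)) (b + (c - a))" using ovs_addr[OF o r] .
  moreover have "a + (c - a) = c" by simp
  moreover have "b + (c - a) = d" using e by (simp add: algebra_simps)
  ultimately show ?thesis by simp
qed

lemma ovs_add2:
  assumes o: "ordered_vs R" and "R a b" "R c d"
  shows "R (a + c) (b + d)"
proof -
  have "R (a + c) (b + c)" using ovs_addr[OF o assms(2)] .
  moreover have "R (b + c) (b + d)" using ovs_eqdiff[OF o assms(3)] by simp
  ultimately show ?thesis using ovs_trans[OF o] by blast
qed

lemma ovs_half:
  assumes o: "ordered_vs R" and r: "R S (2 *\<^sub>R w)"
  shows "R ((1/2) *\<^sub>R S) w"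
proof -
  have "R ((1/2) *\<^sub>R S) ((1/2) *\<^sub>R (2 *\<^sub>R w))" by (rule ovs_scale[OF o r]) simp
  then show ?thesis by simp
qed

lemma ovs_half2:
  assumes o: "ordered_vs R" and r: "R (2 *\<^sub>R w) S"
  shows "R w ((1/2) *\<^sub>R S)"
proof -
  have "R ((1/2) *\<^sub>R (2 *\<^sub>R w)) ((1/2) *\<^sub>R S)" by (rule ovs_scale[OF o r]) simp
  then show ?thesis by simp
qed

locale mls =
  fixes le sle :: "'a::real_vector \<Rightarrow> 'a \<Rightarrow> bool"
  assumes M: "mixed_lattice_vs le sle" and Q: "quasi_regular le sle"
begin

abbreviation "U \<equiv> mup le sle"
abbreviation "L \<equiv> mlow le sle"
abbreviation "S \<equiv> sabs le sle"

lemma leo: "ordered_vs le" using M unfolding mixed_lattice_vs_def by blast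
lemma sleo: "ordered_vs sle" using M unfolding mixed_lattice_vs_def by blast

lemma mup_is: "is_mup le sle x y (U x y)"
proof -
  obtain m where m: "is_mup le sle x y m" using M unfolding mixed_lattice_vs_def by blast
  have "\<exists>!m. is_mup le sle x y m"
  proof (rule ex1I[where P="is_mup le sle x y", OF m])
    fix m' assume "is_mup le sle x y m'"
    then show "m' = m" using m ovs_antisym[OF leo] unfolding is_mup_def by blast
  qed
  then show ?thesis unfolding mup_def by (rule theI')
qed

lemma mlow_is: "is_mlow le sle x y (L x y)"
proof -
  obtain m where m: "is_mlow le sle x y m" using M unfolding mixed_lattice_vs_def by blast
  have "\<exists>!m. is_mlow le sle x y m"
  proof (rule ex1I[where P="is_mlow le sle x y", OF m])
    fix m' assume "is_mlow le sle x y m'"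
    then show "m' = m" using m ovs_antisym[OF leo] unfolding is_mlow_def by blast
  qed
  then show ?thesis unfolding mlow_def by (rule theI')
qed

lemma U1: "sle x (U x y)" using mup_is unfolding is_mup_def by blast
lemma U2: "le y (U x y)" using mup_is unfolding is_mup_def by blast
lemma U3: "sle x w \<Longrightarrow> le y w \<Longrightarrow> le (U x y) w" using mup_is unfolding is_mup_def by blast
lemma L1: "sle (L x y) x" using mlow_is unfolding is_mlow_def by blast
lemma L2: "le (L x y) y" using mlow_is unfolding is_mlow_def by blast
lemma L3: "sle w x \<Longrightarrow> le w y \<Longrightarrow> le w (L x y)" using mlow_is unfolding is_mlow_def by blast

lemma spec0: assumes "sle 0 p" shows "le 0 p"
proof -
  have a: "sle 0 (L 0 p)" using Q assms ovs_refl[OF sleo] unfolding quasi_regular_def by blast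
  have "L 0 p = 0" using ovs_antisym[OF sleo a L1] by simp
  then show ?thesis using L2[of 0 p] by simp
qed

lemma spec: assumes "sle a b" shows "le a b"
proof -
  have "sle 0 (b - a)" using ovs_eqdiff[OF sleo assms] by simp
  then have "le 0 (b - a)" by (rule spec0)
  then show ?thesis using ovs_eqdiff[OF leo] by fastforce
qed

lemma sabs_def': "S x = (1/2) *\<^sub>R (U x 0 + U 0 (- x) + U (- x) 0 + U 0 x)"
  unfolding sabs_def by simp

lemma S5a: "le x (S x)"
proof -
  have "le (x + 0 + 0 + x) (U x 0 + U 0 (- x) + U (- x) 0 + U 0 x)"
    by (rule ovs_add2[OF leo ovs_add2[OF leo ovs_add2[OF leo spec[OF U1[of x 0]] spec0[OF U1[of 0 "-x"]]]
          U2] U2])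
  then have "le (2 *\<^sub>R x) (U x 0 + U 0 (- x) + U (- x) 0 + U 0 x)"
    by (simp add: scaleR_2)
  then show ?thesis unfolding sabs_def' by (rule ovs_half2[OF leo])
qed

lemma S5b: "le (- x) (S x)"
proof -
  have "le (0 + (-x) + (-x) + 0) (U x 0 + U 0 (- x) + U (- x) 0 + U 0 x)"
    by (rule ovs_add2[OF leo ovs_add2[OF leo ovs_add2[OF leo U2 U2]
          spec[OF U1[of "-x" 0]]] spec0[OF U1[of 0 x]]])
  then have "le (2 *\<^sub>R (-x)) (U x 0 + U 0 (- x) + U (- x) 0 + U 0 x)"
    by (simp add: scaleR_2)
  then show ?thesis unfolding sabs_def' by (rule ovs_half2[OF leo])
qed

lemma S1: assumes "sle 0 a" shows "le (S a) a"
proof -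
  have a0: "le 0 a" using spec0[OF assms] .
  have "le (U a 0 + U 0 (- a) + U (- a) 0 + U 0 a) (a + 0 + 0 + a)"
  proof (intro ovs_add2[OF leo])
    show "le (U a 0) a" by (rule U3[OF ovs_refl[OF sleo] a0])
    show "le (U 0 (- a)) 0" by (rule U3[OF ovs_refl[OF sleo]]) (use ovs_eqdiff[OF leo a0] in simp)
    show "le (U (- a) 0) 0" by (rule U3[OF _ ovs_refl[OF leo]]) (use ovs_eqdiff[OF sleo assms] in simp)
    show "le (U 0 a) a" by (rule U3[OF assms ovs_refl[OF leo]])
  qed
  then have "le (U a 0 + U 0 (- a) + U (- a) 0 + U 0 a) (2 *\<^sub>R a)" by (simp add: scaleR_2)
  then show ?thesis unfolding sabs_def' by (rule ovs_half[OF leo])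
qed

lemma S2: "sle 0 (S x)"
proof -
  have "sle (x + 0 + (-x) + 0) (U x 0 + U 0 (- x) + U (- x) 0 + U 0 x)"
    using U1[of x 0] U1[of 0 "-x"] U1[of "-x" 0] U1[of 0 x]
    by (intro ovs_add2[OF sleo]) auto
  then have "sle 0 (U x 0 + U 0 (- x) + U (- x) 0 + U 0 x)" by simp
  then have "sle ((1/2) *\<^sub>R 0) ((1/2) *\<^sub>R (U x 0 + U 0 (- x) + U (- x) 0 + U 0 x))"
    by (rule ovs_scale[OF sleo]) simp
  then show ?thesis unfolding sabs_def' by simp
qed

lemma S4a: assumes z0: "le 0 z" shows "le (S z) (U 0 z)"
proof -
  have "le (U z 0 + U 0 (- z) + U (- z) 0 + U 0 z) (z + 0 + (U 0 z - z) + U 0 z)"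
  proof (intro ovs_add2[OF leo])
    show "le (U z 0) z" by (rule U3[OF ovs_refl[OF sleo] z0])
    show "le (U 0 (- z)) 0" by (rule U3[OF ovs_refl[OF sleo]]) (use ovs_eqdiff[OF leo z0] in simp)
    show "le (U (- z) 0) (U 0 z - z)"
    proof (rule U3)
      show "sle (- z) (U 0 z - z)" using ovs_eqdiff[OF sleo U1[of 0 z]] by simp
      show "le 0 (U 0 z - z)" using ovs_eqdiff[OF leo U2[of z 0]] by simp
    qed
    show "le (U 0 z) (U 0 z)" by (rule ovs_refl[OF leo])
  qed
  then have "le (U z 0 + U 0 (- z) + U (- z) 0 + U 0 z) (2 *\<^sub>R U 0 z)" by (simp add: scaleR_2)
  then show ?thesis unfolding sabs_def' by (rule ovs_half[OF leo])
qed

lemma S4b: "le (U 0 y) (S y)"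
proof -
  have "le (U 0 y - U 0 y) (U (- y) 0 + y - U 0 y)"
  proof -
    have "le (U 0 y) (U (- y) 0 + y)"
    proof (rule U3)
      show "sle 0 (U (- y) 0 + y)" using ovs_eqdiff[OF sleo U1[of "-y" 0]] by simp
      show "le y (U (- y) 0 + y)" using ovs_eqdiff[OF leo U2[of 0 "-y"]] by simp
    qed
    then show ?thesis using ovs_eqdiff[OF leo] by fastforce
  qed
  have "le (y + 0 + (U 0 y - y) + U 0 y) (U y 0 + U 0 (- y) + U (- y) 0 + U 0 y)"
  proof (intro ovs_add2[OF leo])
    show "le y (U y 0)" by (rule spec[OF U1])
    show "le 0 (U 0 (- y))" by (rule spec0[OF U1])
    show "le (U 0 y - y) (U (- y) 0)"
    proof -
      have "le (U 0 y) (U (- y) 0 + y)"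
      proof (rule U3)
        show "sle 0 (U (- y) 0 + y)" using ovs_eqdiff[OF sleo U1[of "-y" 0]] by simp
        show "le y (U (- y) 0 + y)" using ovs_eqdiff[OF leo U2[of 0 "-y"]] by simp
      qed
      then show ?thesis using ovs_eqdiff[OF leo] by fastforce
    qed
    show "le (U 0 y) (U 0 y)" by (rule ovs_refl[OF leo])
  qed
  then have "le (2 *\<^sub>R U 0 y) (U y 0 + U 0 (- y) + U (- y) 0 + U 0 y)" by (simp add: scaleR_2)
  then show ?thesis unfolding sabs_def' by (rule ovs_half2[OF leo])
qed

lemma S3: assumes "le 0 z" "le z y" shows "le (S z) (S y)"
proof -
  have "le (U 0 z) (U 0 y)"
    by (rule U3[OF U1]) (rule ovs_trans[OF leo assms(2) U2])
  then show ?thesis using S4a[OF assms(1)] S4b[of y] ovs_trans[OF leo] by blast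
qed

lemma S6: "le (U v 0) (S v)"
proof -
  have h: "le (U v 0) (U 0 (- v) + v)"
  proof (rule U3)
    show "sle v (U 0 (- v) + v)" using ovs_eqdiff[OF sleo U1[of 0 "-v"]] by simp
    show "le 0 (U 0 (- v) + v)" using ovs_eqdiff[OF leo U2[of "-v" 0]] by simp
  qed
  have "le (U v 0 + (U v 0 - v) + 0 + v) (U v 0 + U 0 (- v) + U (- v) 0 + U 0 v)"
  proof (intro ovs_add2[OF leo])
    show "le (U v 0) (U v 0)" by (rule ovs_refl[OF leo])
    show "le (U v 0 - v) (U 0 (- v))" using ovs_eqdiff[OF leo h] by simp
    show "le 0 (U (- v) 0)" by (rule U2)
    show "le v (U 0 v)" by (rule U2)
  qed
  then have "le (2 *\<^sub>R U v 0) (U v 0 + U 0 (- v) + U (- v) 0 + U 0 v)" by (simp add: scaleR_2)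
  then show ?thesis unfolding sabs_def' by (rule ovs_half2[OF leo])
qed

end

theorem theorem5p18:
  fixes le sle :: "'a::real_vector \<Rightarrow> 'a \<Rightarrow> bool" and A :: "'a set"
  assumes "mixed_lattice_vs le sle" and "quasi_regular le sle" and "subspace A"
  shows "ml_ideal le sle A \<longleftrightarrow>
           (\<forall>x y. y \<in> A \<longrightarrow> le (sabs le sle x) (sabs le sle y) \<longrightarrow> x \<in> A)"
proof -
  interpret mls le sle using assms(1,2) by unfold_locales
  note sub = assms(3)
  show ?thesis
  proof
    assume I: "ml_ideal le sle A"
    have cvx: "\<And>x y z. x \<in> A \<Longrightarrow> y \<in> A \<Longrightarrow> le x z \<Longrightarrow> le z y \<Longrightarrow> z \<in> A"
      using I unfolding ml_ideal_def by blast
    have cl: "\<And>x y. x \<in> A \<Longrightarrow> y \<in> A \<Longrightarrow> U x y \<in> A"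
      using I unfolding ml_ideal_def by blast
    have SA: "S y \<in> A" if "y \<in> A" for y
    proof -
      have z: "0 \<in> A" and m: "- y \<in> A" using sub that by (auto simp: subspace_0 subspace_neg)
      have "U y 0 + U 0 (- y) + U (- y) 0 + U 0 y \<in> A"
        using cl[OF that z] cl[OF z m] cl[OF m z] cl[OF z that] sub
        by (intro subspace_add) auto
      then show ?thesis unfolding sabs_def' using sub by (rule subspace_scale[rotated])
    qed
    show "\<forall>x y. y \<in> A \<longrightarrow> le (S x) (S y) \<longrightarrow> x \<in> A"
    proof (intro allI impI)
      fix x y assume y: "y \<in> A" and h: "le (S x) (S y)"
      have "le x (S y)" using ovs_trans[OF leo S5a h] .
      moreover have "le (- S y) x"
      proof -
        have "le (- x) (S y)" using ovs_trans[OF leo S5b h] .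
        then show ?thesis using ovs_eqdiff[OF leo] by fastforce
      qed
      moreover have "- S y \<in> A" using SA[OF y] sub by (simp add: subspace_neg)
      ultimately show "x \<in> A" using cvx SA[OF y] by blast
    qed
  next
    assume C: "\<forall>x y. y \<in> A \<longrightarrow> le (S x) (S y) \<longrightarrow> x \<in> A"
    have SA: "S v \<in> A" if "v \<in> A" for v
      using C that S1[OF S2[of v]] by blast
    have cvx: "z \<in> A" if "x \<in> A" "y \<in> A" "le x z" "le z y" for x y z
    proof -
      have "le 0 (z - x)" using ovs_eqdiff[OF leo that(3)] by simp
      moreover have "le (z - x) (y - x)" using ovs_eqdiff[OF leo that(4)] by simp
      moreover have "y - x \<in> A" using that sub by (simp add: subspace_diff)
      ultimately have "z - x \<in> A" using C S3 by blast
      then have "(z - x) + x \<in> A" using subspace_add[OF sub _ that(1)] by blast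
      then show ?thesis by simp
    qed
    have z0: "0 \<in> A" using sub by (simp add: subspace_0)
    have clU: "U x y \<in> A" if "x \<in> A" "y \<in> A" for x y
    proof -
      have d: "x - y \<in> A" using that sub by (simp add: subspace_diff)
      have "U (x - y) 0 \<in> A"
        using cvx[OF z0 SA[OF d] U2 S6] .
      then have w: "y + U (x - y) 0 \<in> A" using that sub by (simp add: subspace_add)
      have "le (U x y) (y + U (x - y) 0)"
      proof (rule U3)
        show "sle x (y + U (x - y) 0)" using ovs_eqdiff[OF sleo U1[of "x - y" 0]] by simp
        show "le y (y + U (x - y) 0)" using ovs_eqdiff[OF leo U2[of 0 "x - y"]] by simp
      qed
      then show ?thesis using cvx[OF that(2) w U2] by blast
    qed
    have clL: "L x y \<in> A" if "x \<in> A" "y \<in> A" for x y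
    proof -
      have d: "x - y \<in> A" using that sub by (simp add: subspace_diff)
      have "U 0 (x - y) \<in> A"
        using cvx[OF z0 SA[OF d] spec0[OF U1] S4b] .
      then have w: "x - U 0 (x - y) \<in> A" using that sub by (simp add: subspace_diff)
      have "le (x - U 0 (x - y)) (L x y)"
      proof (rule L3)
        show "sle (x - U 0 (x - y)) x" using ovs_eqdiff[OF sleo U1[of 0 "x - y"]] by simp
        show "le (x - U 0 (x - y)) y" using ovs_eqdiff[OF leo U2[of "x - y" 0]] by simp
      qed
      then show ?thesis using cvx[OF w that(2) _ L2] by blast
    qed
    show "ml_ideal le sle A"
      unfolding ml_ideal_def using sub clU clL cvx by blast
  qed
qed

end
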